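(* Let $(X,d)$ be a complete metric space, let $k\geq 2$ and $0<\rho<1$, and let $\mu:X^k\to X$ be a $k$-mean that is nonexpansive and coordinatewise $\rho$-contractive. Then there exists a unique family of continuous means $\mu_n:X^n\to X$, one for every $n>k$, such that $\mu_{k+1}$ is a $\beta$-extension of $\mu$ and $\mu_{n+1}$ is a $\beta$-extension of $\mu_n$ for every $n>k$. Furthermore, each $\mu_n$ is nonexpansive and coordinatewise $\rho$-contractive.
   Context: A $k$-mean on a set $X$ is a map $\mu:X^k\to X$ with $\mu(x,\ldots,x)=x$ for all $x\in X$. For a $k$-mean $\mu$, the barycentric operator $\beta_\mu:X^{k+1}\to X^{k+1}$ is $\beta_\mu(\mathbf{x})=(\mu(\pi_{\neq 1}\mathbf{x}),\ldots,\mu(\pi_{\neq k+1}\mathbf{x}))$, where for $\mathbf{x}=(x_1,\ldots,x_{k+1})$, $\pi_{\neq j}\mathbf{x}=(x_1,\ldots,x_{j-1},x_{j+1},\ldots,x_{k+1})\in X^k$. A $(k+1)$-mean $\nu$ is a $\beta$-extension of $\mu$ if for every $\mathbf{x}\in X^{k+1}$, $\lim_n\beta_\mu^n(\mathbf{x})=(\nu(\mathbf{x}),\ldots,\nu(\mathbf{x}))$. A $k$-mean $\mu$ on a metric space is nonexpansive if $d(\mu(\mathbf{x}),\mu(\mathbf{y}))\leq\max_{1\le j\le k} d(x_j,y_j)$ for all $\mathbf{x},\mathbf{y}\in X^k$; it is coordinatewise $\rho$-contractive if $d(\mu(\mathbf{x}),\mu(\mathbf{y}))\leq\rho\, d(x_j,y_j)$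 whenever $\mathbf{x},\mathbf{y}\in X^k$ differ only in the $j$-th coordinate. *)

theory Defs
  imports "HOL-Analysis.Analysis"
begin

text \<open>Points of X^n are represented as lists of length n; an n-ary map
  X^n \<rightarrow> X is a function on lists, of which only the values on lists
  of length n matter.\<close>

definition is_mean :: "nat \<Rightarrow> ('a list \<Rightarrow> 'a) \<Rightarrow> bool" where
  "is_mean n \<mu> \<longleftrightarrow> (\<forall>x. \<mu> (replicate n x) = x)"

definition continuous_mean :: "nat \<Rightarrow> ('a::metric_space list \<Rightarrow> 'a) \<Rightarrow> bool" where
  "continuous_mean n \<mu> \<longleftrightarrow>
     (\<forall>xs. length xs = n \<longrightarrow> (\<forall>e>0. \<exists>d>0. \<forall>ys. length ys = n \<longrightarrow>
        (\<forall>i<n. dist (xs ! i) (ys ! i) < d) \<longrightarrow> dist (\<mu> xs) (\<mu> ys) < e))"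

definition nonexpansive_mean :: "nat \<Rightarrow> ('a::metric_space list \<Rightarrow> 'a) \<Rightarrow> bool" where
  "nonexpansive_mean n \<mu> \<longleftrightarrow>
     (\<forall>xs ys. length xs = n \<longrightarrow> length ys = n \<longrightarrow>
        dist (\<mu> xs) (\<mu> ys) \<le> (MAX j\<in>{..<n}. dist (xs ! j) (ys ! j)))"

definition coord_contractive :: "nat \<Rightarrow> real \<Rightarrow> ('a::metric_space list \<Rightarrow> 'a) \<Rightarrow> bool" where
  "coord_contractive n \<rho> \<mu> \<longleftrightarrow>
     (\<forall>xs ys j. length xs = n \<longrightarrow> length ys = n \<longrightarrow> j < n \<longrightarrow>
        (\<forall>i<n. i \<noteq> j \<longrightarrow> xs ! i = ys ! i) \<longrightarrow>
        dist (\<mu> xs) (\<mu> ys) \<le> \<rho> * dist (xs ! j) (ys ! j))"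

text \<open>pi_{\<noteq> j}: delete the j-th coordinate (0-based).\<close>
definition omit :: "nat \<Rightarrow> 'a list \<Rightarrow> 'a list" where
  "omit j xs = take j xs @ drop (Suc j) xs"

definition barycentric :: "('a list \<Rightarrow> 'a) \<Rightarrow> 'a list \<Rightarrow> 'a list" where
  "barycentric \<mu> xs = map (\<lambda>j. \<mu> (omit j xs)) [0..<length xs]"

text \<open>\<nu> (a (k+1)-mean) is a beta-extension of the k-mean \<mu>: iterates of the
  barycentric operator converge (in X^{k+1}, i.e. coordinatewise) to the diagonal point.\<close>
definition beta_extension :: "nat \<Rightarrow> ('a::metric_space list \<Rightarrow> 'a) \<Rightarrow> ('a list \<Rightarrow> 'a) \<Rightarrow> bool" where
  "beta_extension k \<mu> \<nu> \<longleftrightarrow> is_mean (Suc k) \<nu> \<and>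
     (\<forall>xs. length xs = Suc k \<longrightarrow>
        (\<forall>i<Suc k. (\<lambda>m. ((barycentric \<mu> ^^ m) xs) ! i) \<longlonglongrightarrow> \<nu> xs))"

end

theory Submission
  imports Defs
begin

lemma length_omit[simp]: "j < length xs \<Longrightarrow> length (omit j xs) = length xs - 1"
  by (simp add: omit_def)

lemma nth_omit: "j < length xs \<Longrightarrow> p < length xs - 1 \<Longrightarrow>
   omit j xs ! p = (if p < j then xs ! p else xs ! Suc p)"
  by (auto simp add: omit_def nth_append min_def)

lemma length_bary[simp]: "length (barycentric \<mu> xs) = length xs"
  by (simp add: barycentric_def)

lemma nth_bary[simp]: "i < length xs \<Longrightarrow> barycentric \<mu> xs ! i = \<mu> (omit i xs)"
  by (simp add: barycentric_def)

lemma length_iter[simp]: "length ((barycentric \<mu> ^^ m) xs) = length xs"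
  by (induction m) auto

lemma omit_replicate: "j < n \<Longrightarrow> omit j (replicate n x) = replicate (n - 1) x"
  by (simp add: omit_def replicate_add[symmetric])

lemma bary_replicate: "barycentric \<mu> (replicate n x) = map (\<lambda>j. \<mu> (replicate (n-1) x)) [0..<n]"
  by (simp add: barycentric_def omit_replicate)

lemma max_le:
  fixes xs ys :: "'a::metric_space list"
  assumes "0 < n" "\<And>j. j < n \<Longrightarrow> dist (xs ! j) (ys ! j) \<le> c"
  shows "(MAX j\<in>{..<n}. dist (xs ! j) (ys ! j)) \<le> c"
  using assms by (subst Max_le_iff) auto

lemma max_less:
  fixes xs ys :: "'a::metric_space list"
  assumes "0 < n" "\<And>j. j < n \<Longrightarrow> dist (xs ! j) (ys ! j) < c"
  shows "(MAX j\<in>{..<n}. dist (xs ! j) (ys ! j)) < c"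
  using assms by (subst Max_less_iff) auto

lemma nonexp_le:
  fixes \<mu> :: "'a::metric_space list \<Rightarrow> 'a"
  assumes "nonexpansive_mean n \<mu>" "0 < n" "length xs = n" "length ys = n"
    "\<And>j. j < n \<Longrightarrow> dist (xs ! j) (ys ! j) \<le> c"
  shows "dist (\<mu> xs) (\<mu> ys) \<le> c"
  using assms max_le[of n xs ys c] unfolding nonexpansive_mean_def by fastforce

lemma geom_convergent:
  fixes f :: "nat \<Rightarrow> 'a::{metric_space,complete_space}"
  assumes r: "0 < r" "r < 1" and C: "0 \<le> C" and h: "\<And>m. dist (f (Suc m)) (f m) \<le> C * r ^ m"
  shows "convergent f"
proof -
  have b: "dist (f m) (f (m + p)) \<le> C * r ^ m * (1 - r ^ p) / (1 - r)" for m p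
  proof (induction p)
    case 0 then show ?case by simp
  next
    case (Suc p)
    have "dist (f m) (f (m + Suc p)) \<le> dist (f m) (f (m + p)) + dist (f (Suc (m + p))) (f (m + p))"
      by (metis add_Suc_right dist_commute dist_triangle)
    also have "\<dots> \<le> C * r ^ m * (1 - r ^ p) / (1 - r) + C * r ^ (m + p)"
      using Suc h by (meson add_mono)
    also have "\<dots> = C * r ^ m * (1 - r ^ Suc p) / (1 - r)"
      using r by (simp add: field_simps power_add)
    finally show ?case .
  qed
  have b2: "dist (f m) (f (m + p)) \<le> C * r ^ m / (1 - r)" for m p
  proof -
    have "C * r ^ m * (1 - r ^ p) \<le> C * r ^ m"
      using r C by (simp add: mult_left_le)
    then show ?thesis using b[of m p] r by (smt (verit) divide_right_mono)
  qed
  have "Cauchy f"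
  proof (rule CauchyI')
    fix e :: real assume e: "0 < e"
    obtain M where M: "r ^ M < e * (1 - r) / (C + 1)"
      using real_arch_pow_inv[of "e * (1 - r) / (C + 1)" r] e r C by auto
    show "\<exists>M. \<forall>m\<ge>M. \<forall>n>m. dist (f m) (f n) < e"
    proof (intro exI allI impI)
      fix m n assume mn: "M \<le> m" "m < n"
      have "dist (f m) (f n) \<le> C * r ^ m / (1 - r)"
        using b2[of m "n - m"] mn by simp
      also have "\<dots> \<le> C * r ^ M / (1 - r)"
        using r C mn by (intro divide_right_mono mult_left_mono power_decreasing) auto
      also have "\<dots> \<le> (C + 1) * r ^ M / (1 - r)"
        using r C by (intro divide_right_mono mult_right_mono) auto
      also have "\<dots> < (C + 1) * (e * (1 - r) / (C + 1)) / (1 - r)"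
        using r C M by (intro divide_strict_right_mono mult_strict_left_mono) auto
      also have "\<dots> = e" using r C by simp
      finally show "dist (f m) (f n) < e" .
    qed
  qed
  then show ?thesis using Cauchy_convergent by blast
qed


definition ext :: "('a::metric_space list \<Rightarrow> 'a) \<Rightarrow> 'a list \<Rightarrow> 'a" where
  "ext \<mu> xs = lim (\<lambda>m. (barycentric \<mu> ^^ m) xs ! 0)"

lemma diam_bound:
  fixes zs :: "'a::metric_space list"
  assumes "length zs = Suc k" "\<And>p. p < k \<Longrightarrow> dist (zs ! p) (zs ! Suc p) \<le> a"
  shows "q < Suc k \<Longrightarrow> dist (zs ! 0) (zs ! q) \<le> real q * a"
proof (induction q)
  case 0 then show ?case by simp
next
  case (Suc q)
  have "dist (zs ! 0) (zs ! Suc q) \<le> dist (zs ! 0) (zs ! q) + dist (zs ! q) (zs ! Suc q)"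
    by (rule dist_triangle)
  also have "\<dots> \<le> real q * a + a" using Suc assms(2)[of q] by simp
  finally show ?case by (simp add: algebra_simps)
qed

lemma diam_bound2:
  fixes zs :: "'a::metric_space list"
  assumes "length zs = Suc k" "\<And>p. p < k \<Longrightarrow> dist (zs ! p) (zs ! Suc p) \<le> a" "0 \<le> a"
    "i < Suc k" "j < Suc k"
  shows "dist (zs ! i) (zs ! j) \<le> 2 * real k * a"
proof -
  have "dist (zs ! i) (zs ! j) \<le> dist (zs ! 0) (zs ! i) + dist (zs ! 0) (zs ! j)"
    by (rule dist_triangle3)
  also have "\<dots> \<le> real i * a + real j * a"
    using diam_bound[OF assms(1,2)] assms(4,5) by (meson add_mono)
  also have "\<dots> \<le> real k * a + real k * a"
    using assms by (intro add_mono mult_right_mono) auto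
  finally show ?thesis by (simp add: algebra_simps)
qed

lemma max_nonneg:
  fixes xs :: "'a::metric_space list"
  assumes "0 < k" shows "0 \<le> (MAX q\<in>{..<k}. dist (xs ! q) (xs ! Suc q))"
proof -
  have "dist (xs!0) (xs!Suc 0) \<le> (MAX q\<in>{..<k}. dist (xs ! q) (xs ! Suc q))"
    using assms by (intro Max_ge) auto
  then show ?thesis using zero_le_dist order_trans by blast
qed

context
  fixes \<mu> :: "'a::{metric_space,complete_space} list \<Rightarrow> 'a" and k :: nat and \<rho> :: real
  assumes k: "0 < k" and r: "0 < \<rho>" "\<rho> < 1"
    and mean: "is_mean k \<mu>" and ne: "nonexpansive_mean k \<mu>" and cc: "coord_contractive k \<rho> \<mu>"
begin

lemma bary_nonexp:
  assumes "length xs = Suc k" "length ys = Suc k" "\<And>i. i < Suc k \<Longrightarrow> dist (xs ! i) (ys ! i) \<le> c"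
    "i < Suc k"
  shows "dist (barycentric \<mu> xs ! i) (barycentric \<mu> ys ! i) \<le> c"
proof -
  have "dist (\<mu> (omit i xs)) (\<mu> (omit i ys)) \<le> c"
  proof (rule nonexp_le[OF ne k])
    fix p assume p: "p < k"
    show "dist (omit i xs ! p) (omit i ys ! p) \<le> c"
      using assms p by (simp add: nth_omit)
  qed (use assms in auto)
  then show ?thesis using assms by simp
qed

lemma iter_nonexp:
  assumes "length xs = Suc k" "length ys = Suc k" "\<And>i. i < Suc k \<Longrightarrow> dist (xs ! i) (ys ! i) \<le> c"
  shows "i < Suc k \<Longrightarrow> dist ((barycentric \<mu> ^^ m) xs ! i) ((barycentric \<mu> ^^ m) ys ! i) \<le> c"
proof (induction m arbitrary: i)
  case 0 then show ?case using assms by simp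
next
  case (Suc m)
  show ?case using bary_nonexp[of "(barycentric \<mu> ^^ m) xs" "(barycentric \<mu> ^^ m) ys" c i] Suc assms
    by simp
qed

lemma bary_consec:
  assumes "length zs = Suc k" "p < k"
  shows "dist (barycentric \<mu> zs ! p) (barycentric \<mu> zs ! Suc p) \<le> \<rho> * dist (zs ! p) (zs ! Suc p)"
proof -
  have "dist (\<mu> (omit p zs)) (\<mu> (omit (Suc p) zs)) \<le> \<rho> * dist (omit p zs ! p) (omit (Suc p) zs ! p)"
  proof -
    have "\<forall>i<k. i \<noteq> p \<longrightarrow> omit p zs ! i = omit (Suc p) zs ! i"
      using assms by (auto simp: nth_omit)
    moreover have "length (omit p zs) = k" "length (omit (Suc p) zs) = k" using assms by auto
    ultimately show ?thesis using cc assms(2) unfolding coord_contractive_def by blast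
  qed
  moreover have "omit p zs ! p = zs ! Suc p" "omit (Suc p) zs ! p = zs ! p"
    using assms by (simp_all add: nth_omit)
  ultimately show ?thesis using assms by (simp add: dist_commute)
qed


lemma iter_consec:
  assumes "length xs = Suc k"
  shows "p < k \<Longrightarrow> dist ((barycentric \<mu> ^^ m) xs ! p) ((barycentric \<mu> ^^ m) xs ! Suc p)
     \<le> \<rho> ^ m * (MAX q\<in>{..<k}. dist (xs ! q) (xs ! Suc q))"
proof (induction m arbitrary: p)
  case 0 then show ?case by (simp add: Max_ge)
next
  case (Suc m)
  have "dist ((barycentric \<mu> ^^ Suc m) xs ! p) ((barycentric \<mu> ^^ Suc m) xs ! Suc p)
     \<le> \<rho> * dist ((barycentric \<mu> ^^ m) xs ! p) ((barycentric \<mu> ^^ m) xs ! Suc p)"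
    using bary_consec[of "(barycentric \<mu> ^^ m) xs" p] Suc assms by simp
  also have "\<dots> \<le> \<rho> * (\<rho> ^ m * (MAX q\<in>{..<k}. dist (xs ! q) (xs ! Suc q)))"
    using Suc r by (intro mult_left_mono) auto
  finally show ?case by simp
qed

lemma iter_diam:
  assumes "length xs = Suc k" "i < Suc k" "j < Suc k"
  shows "dist ((barycentric \<mu> ^^ m) xs ! i) ((barycentric \<mu> ^^ m) xs ! j)
     \<le> (2 * real k * (MAX q\<in>{..<k}. dist (xs ! q) (xs ! Suc q))) * \<rho> ^ m"
proof -
  have c0: "0 \<le> (MAX q\<in>{..<k}. dist (xs ! q) (xs ! Suc q))"
    using max_nonneg[OF k] .
  have "dist ((barycentric \<mu> ^^ m) xs ! i) ((barycentric \<mu> ^^ m) xs ! j)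
     \<le> 2 * real k * (\<rho> ^ m * (MAX q\<in>{..<k}. dist (xs ! q) (xs ! Suc q)))"
    using diam_bound2[of "(barycentric \<mu> ^^ m) xs" k "\<rho> ^ m * (MAX q\<in>{..<k}. dist (xs ! q) (xs ! Suc q))" i j]
      iter_consec[OF assms(1)] assms c0 r by simp
  then show ?thesis by (simp add: algebra_simps)
qed

lemma iter_step:
  assumes "length xs = Suc k" "i < Suc k"
  shows "dist ((barycentric \<mu> ^^ Suc m) xs ! i) ((barycentric \<mu> ^^ m) xs ! i)
     \<le> (2 * real k * (MAX q\<in>{..<k}. dist (xs ! q) (xs ! Suc q))) * \<rho> ^ m"
proof -
  let ?y = "(barycentric \<mu> ^^ m) xs"
  have "?y ! i = \<mu> (replicate k (?y ! i))" using mean unfolding is_mean_def by simp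
  then have e: "dist ((barycentric \<mu> ^^ Suc m) xs ! i) (?y ! i) = dist (\<mu> (omit i ?y)) (\<mu> (replicate k (?y ! i)))"
    using assms by simp
  have "dist (\<mu> (omit i ?y)) (\<mu> (replicate k (?y ! i)))
     \<le> (2 * real k * (MAX q\<in>{..<k}. dist (xs ! q) (xs ! Suc q))) * \<rho> ^ m"
  proof (rule nonexp_le[OF ne k])
    fix p assume p: "p < k"
    show "dist (omit i ?y ! p) (replicate k (?y ! i) ! p)
       \<le> (2 * real k * (MAX q\<in>{..<k}. dist (xs ! q) (xs ! Suc q))) * \<rho> ^ m"
      using p assms iter_diam[OF assms(1)] by (simp add: nth_omit)
  qed (use assms in auto)
  then show ?thesis using e by simp
qed

lemma iter_conv:
  assumes "length xs = Suc k" "i < Suc k"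
  shows "(\<lambda>m. (barycentric \<mu> ^^ m) xs ! i) \<longlonglongrightarrow> ext \<mu> xs"
proof -
  define C where "C = 2 * real k * (MAX q\<in>{..<k}. dist (xs ! q) (xs ! Suc q))"
  have C0: "0 \<le> C"
    unfolding C_def using max_nonneg[OF k, of xs] by simp
  have "convergent (\<lambda>m. (barycentric \<mu> ^^ m) xs ! 0)"
    by (rule geom_convergent[OF r C0]) (use iter_step[OF assms(1), of 0] in \<open>simp only: C_def\<close>)
  then have l0: "(\<lambda>m. (barycentric \<mu> ^^ m) xs ! 0) \<longlonglongrightarrow> ext \<mu> xs"
    unfolding ext_def by (simp add: convergent_LIMSEQ_iff)
  have "(\<lambda>m. dist ((barycentric \<mu> ^^ m) xs ! i) (ext \<mu> xs)) \<longlonglongrightarrow> 0"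
  proof (rule tendsto_sandwich[of "\<lambda>_. 0" _ _ "\<lambda>m. C * \<rho> ^ m + dist ((barycentric \<mu> ^^ m) xs ! 0) (ext \<mu> xs)"])
    show "\<forall>\<^sub>F m in sequentially. dist ((barycentric \<mu> ^^ m) xs ! i) (ext \<mu> xs)
        \<le> C * \<rho> ^ m + dist ((barycentric \<mu> ^^ m) xs ! 0) (ext \<mu> xs)"
    proof (intro always_eventually allI)
      fix m
      have "dist ((barycentric \<mu> ^^ m) xs ! i) (ext \<mu> xs) \<le> dist ((barycentric \<mu> ^^ m) xs ! i) ((barycentric \<mu> ^^ m) xs ! 0) + dist ((barycentric \<mu> ^^ m) xs ! 0) (ext \<mu> xs)"
        by (rule dist_triangle)
      then show "dist ((barycentric \<mu> ^^ m) xs ! i) (ext \<mu> xs) \<le> C * \<rho> ^ m + dist ((barycentric \<mu> ^^ m) xs ! 0) (ext \<mu> xs)"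
        using iter_diam[OF assms(1) assms(2), of 0 m] unfolding C_def by simp
    qed
    have a: "(\<lambda>m. C * \<rho> ^ m) \<longlonglongrightarrow> 0"
      by (rule tendsto_mult_right_zero[OF LIMSEQ_power_zero]) (use r in simp)
    have b: "(\<lambda>m. dist ((barycentric \<mu> ^^ m) xs ! 0) (ext \<mu> xs)) \<longlonglongrightarrow> 0"
      by (rule tendsto_dist_iff[THEN iffD1, OF l0])
    have "(\<lambda>m. C * \<rho> ^ m + dist ((barycentric \<mu> ^^ m) xs ! 0) (ext \<mu> xs)) \<longlonglongrightarrow> 0 + 0"
      by (rule tendsto_add[OF a b])
    then show "(\<lambda>m. C * \<rho> ^ m + dist ((barycentric \<mu> ^^ m) xs ! 0) (ext \<mu> xs)) \<longlonglongrightarrow> 0"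
      by simp
  qed auto
  then show ?thesis by (rule tendsto_dist_iff[THEN iffD2])
qed


lemma ext_mean: "is_mean (Suc k) (ext \<mu>)"
  unfolding is_mean_def
proof
  fix x
  have b: "barycentric \<mu> (replicate (Suc k) x) = replicate (Suc k) x"
    using mean by (simp add: bary_replicate is_mean_def map_replicate_const del: replicate_Suc)
  have "(barycentric \<mu> ^^ m) (replicate (Suc k) x) = replicate (Suc k) x" for m
    by (induction m) (simp_all add: b del: replicate_Suc)
  then have "(\<lambda>m. (barycentric \<mu> ^^ m) (replicate (Suc k) x) ! 0) \<longlonglongrightarrow> x" by simp
  moreover have "(\<lambda>m. (barycentric \<mu> ^^ m) (replicate (Suc k) x) ! 0) \<longlonglongrightarrow> ext \<mu> (replicate (Suc k) x)"
    by (rule iter_conv) auto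
  ultimately show "ext \<mu> (replicate (Suc k) x) = x" using LIMSEQ_unique by blast
qed

lemma ext_beta: "beta_extension k \<mu> (ext \<mu>)"
  unfolding beta_extension_def using ext_mean iter_conv by blast

lemma ext_le:
  assumes "length xs = Suc k" "length ys = Suc k"
    "\<And>m i. i < Suc k \<Longrightarrow> dist ((barycentric \<mu> ^^ Suc m) xs ! i) ((barycentric \<mu> ^^ Suc m) ys ! i) \<le> c"
  shows "dist (ext \<mu> xs) (ext \<mu> ys) \<le> c"
proof -
  have a: "(\<lambda>m. (barycentric \<mu> ^^ Suc m) xs ! 0) \<longlonglongrightarrow> ext \<mu> xs"
    by (rule LIMSEQ_Suc[OF iter_conv[OF assms(1)]]) simp
  have b: "(\<lambda>m. (barycentric \<mu> ^^ Suc m) ys ! 0) \<longlonglongrightarrow> ext \<mu> ys"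
    by (rule LIMSEQ_Suc[OF iter_conv[OF assms(2)]]) simp
  have "(\<lambda>m. dist ((barycentric \<mu> ^^ Suc m) xs ! 0) ((barycentric \<mu> ^^ Suc m) ys ! 0)) \<longlonglongrightarrow> dist (ext \<mu> xs) (ext \<mu> ys)"
    by (rule tendsto_dist[OF a b])
  then show ?thesis
    by (rule LIMSEQ_le_const2) (use assms(3) in auto)
qed

lemma ext_nonexp: "nonexpansive_mean (Suc k) (ext \<mu>)"
  unfolding nonexpansive_mean_def
proof (intro allI impI)
  fix xs ys :: "'a list" assume l: "length xs = Suc k" "length ys = Suc k"
  show "dist (ext \<mu> xs) (ext \<mu> ys) \<le> (MAX j\<in>{..<Suc k}. dist (xs ! j) (ys ! j))"
    by (rule ext_le[OF l]) (rule iter_nonexp[OF l], auto intro: Max_ge)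
qed

lemma ext_cc: "coord_contractive (Suc k) \<rho> (ext \<mu>)"
  unfolding coord_contractive_def
proof (intro allI impI)
  fix xs ys :: "'a list" and j
  assume l: "length xs = Suc k" "length ys = Suc k" and j: "j < Suc k"
    and eq: "\<forall>i<Suc k. i \<noteq> j \<longrightarrow> xs ! i = ys ! i"
  have b: "dist (barycentric \<mu> xs ! i) (barycentric \<mu> ys ! i) \<le> \<rho> * dist (xs ! j) (ys ! j)"
    if i: "i < Suc k" for i
  proof (cases "i = j")
    case True
    have "omit i xs = omit i ys"
      using l i eq True by (intro nth_equalityI) (auto simp: nth_omit)
    then show ?thesis using l i r by simp
  next
    case False
    define j' where "j' = (if j < i then j else j - 1)"
    have j': "j' < k" using j i False unfolding j'_def by auto
    have o1: "omit i xs ! j' = xs ! j" "omit i ys ! j' = ys ! j"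
      using l i j False j' unfolding j'_def by (auto simp: nth_omit)
    have o2: "\<forall>p<k. p \<noteq> j' \<longrightarrow> omit i xs ! p = omit i ys ! p"
      using l i j False eq unfolding j'_def by (auto simp: nth_omit)
    have lo: "length (omit i xs) = k" "length (omit i ys) = k" using l i by auto
    have "dist (\<mu> (omit i xs)) (\<mu> (omit i ys)) \<le> \<rho> * dist (omit i xs ! j') (omit i ys ! j')"
      using cc[unfolded coord_contractive_def, rule_format, OF lo j'] o2 by blast
    then show ?thesis using o1 l i by simp
  qed
  show "dist (ext \<mu> xs) (ext \<mu> ys) \<le> \<rho> * dist (xs ! j) (ys ! j)"
  proof (rule ext_le[OF l])
    fix m i assume i: "i < Suc k"
    show "dist ((barycentric \<mu> ^^ Suc m) xs ! i) ((barycentric \<mu> ^^ Suc m) ys ! i) \<le> \<rho> * dist (xs ! j) (ys ! j)"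
    proof -
      have "dist ((barycentric \<mu> ^^ m) (barycentric \<mu> xs) ! i) ((barycentric \<mu> ^^ m) (barycentric \<mu> ys) ! i)
         \<le> \<rho> * dist (xs ! j) (ys ! j)"
        by (rule iter_nonexp) (use l b i in auto)
      then show ?thesis by (simp add: funpow_Suc_right del: funpow.simps)
    qed
  qed
qed

end


lemma uniq_ext:
  assumes "beta_extension k \<mu> \<nu>" "beta_extension k \<mu>' \<nu>'"
    "\<forall>ys. length ys = k \<longrightarrow> \<mu>' ys = \<mu> ys" "length xs = Suc k"
  shows "\<nu>' xs = \<nu> xs"
proof -
  have bb: "barycentric \<mu>' zs = barycentric \<mu> zs" if "length zs = Suc k" for zs
    unfolding barycentric_def using assms(3) that by auto
  have e: "(barycentric \<mu>' ^^ m) xs = (barycentric \<mu> ^^ m) xs" for m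
    by (induction m) (simp_all add: bb assms(4))
  have z: "(0::nat) < Suc k" by simp
  have "(\<lambda>m. (barycentric \<mu> ^^ m) xs ! 0) \<longlonglongrightarrow> \<nu> xs"
    using assms(1) unfolding beta_extension_def using assms(4) z by simp
  moreover have "(\<lambda>m. (barycentric \<mu>' ^^ m) xs ! 0) \<longlonglongrightarrow> \<nu>' xs"
    using assms(2) unfolding beta_extension_def using assms(4) z by simp
  then have "(\<lambda>m. (barycentric \<mu> ^^ m) xs ! 0) \<longlonglongrightarrow> \<nu>' xs"
    by (simp only: e)
  ultimately show ?thesis using LIMSEQ_unique by blast
qed

lemma nonexp_cont:
  fixes \<mu> :: "'a::metric_space list \<Rightarrow> 'a"
  assumes "0 < n" "nonexpansive_mean n \<mu>" shows "continuous_mean n \<mu>"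
  unfolding continuous_mean_def
proof (intro allI impI)
  fix xs :: "'a list" and e :: real assume l: "length xs = n" and e: "0 < e"
  have "\<forall>ys. length ys = n \<longrightarrow> (\<forall>i<n. dist (xs ! i) (ys ! i) < e) \<longrightarrow> dist (\<mu> xs) (\<mu> ys) < e"
  proof (intro allI impI)
    fix ys :: "'a list" assume ys: "length ys = n" "\<forall>i<n. dist (xs ! i) (ys ! i) < e"
    have "dist (\<mu> xs) (\<mu> ys) \<le> (MAX j\<in>{..<n}. dist (xs ! j) (ys ! j))"
      using assms(2) l ys(1) unfolding nonexpansive_mean_def by blast
    also have "\<dots> < e" by (rule max_less) (use assms(1) ys(2) in auto)
    finally show "dist (\<mu> xs) (\<mu> ys) < e" .
  qed
  then show "\<exists>d>0. \<forall>ys. length ys = n \<longrightarrow> (\<forall>i<n. dist (xs ! i) (ys ! i) < d) \<longrightarrow> dist (\<mu> xs) (\<mu> ys) < e"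
    using e by blast
qed

theorem theorem3p14:
  fixes \<mu> :: "'a::{metric_space, complete_space} list \<Rightarrow> 'a"
    and k :: nat and \<rho> :: real
  assumes "k \<ge> 2" and "0 < \<rho>" and "\<rho> < 1"
    and "is_mean k \<mu>" and "nonexpansive_mean k \<mu>" and "coord_contractive k \<rho> \<mu>"
  shows "\<exists>M :: nat \<Rightarrow> 'a list \<Rightarrow> 'a.
           ((\<forall>n>k. is_mean n (M n) \<and> continuous_mean n (M n))
            \<and> beta_extension k \<mu> (M (Suc k))
            \<and> (\<forall>n>k. beta_extension n (M n) (M (Suc n))))
         \<and> (\<forall>M' :: nat \<Rightarrow> 'a list \<Rightarrow> 'a.
              ((\<forall>n>k. is_mean n (M' n) \<and> continuous_mean n (M' n))
               \<and> beta_extension k \<mu> (M' (Suc k))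
               \<and> (\<forall>n>k. beta_extension n (M' n) (M' (Suc n))))
              \<longrightarrow> (\<forall>n>k. \<forall>xs. length xs = n \<longrightarrow> M' n xs = M n xs))
         \<and> (\<forall>n>k. nonexpansive_mean n (M n) \<and> coord_contractive n \<rho> (M n))"
proof -
  define M where "M n = (ext ^^ (n - k)) \<mu>" for n
  have MS: "M (Suc n) = ext (M n)" if "k \<le> n" for n
    using that by (simp add: M_def Suc_diff_le)
  have Mk: "M k = \<mu>" by (simp add: M_def)
  have P: "is_mean n (M n) \<and> nonexpansive_mean n (M n) \<and> coord_contractive n \<rho> (M n)"
    if "k \<le> n" for n
    using that
  proof (induction n rule: nat_induct_at_least)
    case base then show ?case using Mk assms by simp
  next
    case (Suc n)
    have n0: "0 < n" using Suc assms by simp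
    have h: "is_mean n (M n)" "nonexpansive_mean n (M n)" "coord_contractive n \<rho> (M n)"
      using Suc.IH by auto
    show ?case unfolding MS[OF Suc.hyps] using ext_mean[OF n0 assms(2,3) h] ext_nonexp[OF n0 assms(2,3) h]
        ext_cc[OF n0 assms(2,3) h] by blast
  qed
  have BE: "beta_extension n (M n) (M (Suc n))" if "k \<le> n" for n
  proof -
    have n0: "0 < n" using that assms by simp
    have h: "is_mean n (M n)" "nonexpansive_mean n (M n)" "coord_contractive n \<rho> (M n)"
      using P[OF that] by auto
    show ?thesis unfolding MS[OF that] using ext_beta[OF n0 assms(2,3) h] .
  qed
  have part1: "(\<forall>n>k. is_mean n (M n) \<and> continuous_mean n (M n))
            \<and> beta_extension k \<mu> (M (Suc k))
            \<and> (\<forall>n>k. beta_extension n (M n) (M (Suc n)))"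
  proof (intro conjI allI impI)
    fix n assume n: "k < n"
    then show "is_mean n (M n)" using P by auto
    show "continuous_mean n (M n)"
      by (rule nonexp_cont) (use n P[of n] in auto)
    show "beta_extension n (M n) (M (Suc n))" using BE n by auto
  next
    show "beta_extension k \<mu> (M (Suc k))" using BE[of k] Mk by simp
  qed
  have part2: "\<forall>n>k. \<forall>xs. length xs = n \<longrightarrow> M' n xs = M n xs"
    if H: "(\<forall>n>k. is_mean n (M' n) \<and> continuous_mean n (M' n))
               \<and> beta_extension k \<mu> (M' (Suc k))
               \<and> (\<forall>n>k. beta_extension n (M' n) (M' (Suc n)))" for M'
  proof -
    have "\<forall>xs. length xs = n \<longrightarrow> M' n xs = M n xs" if "Suc k \<le> n" for n
      using that
    proof (induction n rule: nat_induct_at_least)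
      case base
      show ?case using uniq_ext[of k \<mu> "M (Suc k)" \<mu> "M' (Suc k)"] H BE[of k] Mk by auto
    next
      case (Suc n)
      show ?case using uniq_ext[of n "M n" "M (Suc n)" "M' n" "M' (Suc n)"] H BE[of n] Suc by auto
    qed
    then show ?thesis by (simp add: Suc_le_eq)
  qed
  show ?thesis
    by (rule exI[of _ M]) (use part1 part2 P in auto)
qed

end
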